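(* For every $\epsilon>0$ there exists $d_0$ such that for every fixed integer $d>d_0$, if $G$ is sampled from the configuration model $G^*(n,d)$ (with $nd$ even), then $m(G,2)\ge\frac{n}{d^{2+\epsilon}}$ with probability $1-o(1)$ as $n\to\infty$.
   Context: The configuration model $G^*(n,d)$: take cells $W=[n]\times[d]$, choose a uniformly random perfect matching of $W$, and for each matched pair of cells $(i,a),(j,b)$ add an edge between vertices $i$ and $j$ (the result may be a multigraph with loops and parallel edges). In bootstrap percolation the neighborhood $N(v)$ of a vertex is the set of distinct vertices $u\neq v$ joined to $v$ by at least one edge. Bootstrap percolation with threshold $r\ge 2$: given seeds $A_0\subseteq V$, $A_i=A_{i-1}\cup\{v:|N(v)\cap A_{i-1}|\ge r\}$ for $i\ge 1$, $\langle A_0\rangle=\bigcup_iA_i$; $A_0$ is contagious if $\langle A_0\rangle=V$, and $m(G,r)$ is the minimum size of a contagious set. *)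

theory Defs
  imports "HOL-Probability.Probability"
begin

text \<open>Cells W = [n] x [d], with vertices [n] = {0..<n} and half-edge labels {0..<d}.\<close>
definition cells :: "nat \<Rightarrow> nat \<Rightarrow> (nat \<times> nat) set" where
  "cells n d = {0..<n} \<times> {0..<d}"

text \<open>A perfect matching of W, encoded as a fixed-point-free involution of W
  (identity outside W, so that matchings and such maps are in bijection).\<close>
definition perfect_matchings :: "nat \<Rightarrow> nat \<Rightarrow> ((nat \<times> nat) \<Rightarrow> (nat \<times> nat)) set" where
  "perfect_matchings n d =
     {\<sigma>. (\<forall>w\<in>cells n d. \<sigma> w \<in> cells n d \<and> \<sigma> w \<noteq> w \<and> \<sigma> (\<sigma> w) = w)
        \<and> (\<forall>w. w \<notin> cells n d \<longrightarrow> \<sigma> w = w)}"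

definition cm_nbhd :: "nat \<Rightarrow> ((nat \<times> nat) \<Rightarrow> (nat \<times> nat)) \<Rightarrow> nat \<Rightarrow> nat set" where
  "cm_nbhd d \<sigma> v = {u. u \<noteq> v \<and> (\<exists>a<d. \<exists>b<d. \<sigma> (v, a) = (u, b))}"

fun boot_step :: "nat set \<Rightarrow> (nat \<Rightarrow> nat set) \<Rightarrow> nat \<Rightarrow> nat set \<Rightarrow> nat \<Rightarrow> nat set" where
  "boot_step V N r A0 0 = A0"
| "boot_step V N r A0 (Suc i) =
     boot_step V N r A0 i \<union> {v\<in>V. card (N v \<inter> boot_step V N r A0 i) \<ge> r}"

definition boot_closure :: "nat set \<Rightarrow> (nat \<Rightarrow> nat set) \<Rightarrow> nat \<Rightarrow> nat set \<Rightarrow> nat set" where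
  "boot_closure V N r A0 = (\<Union>i. boot_step V N r A0 i)"

definition contagious :: "nat set \<Rightarrow> (nat \<Rightarrow> nat set) \<Rightarrow> nat \<Rightarrow> nat set \<Rightarrow> bool" where
  "contagious V N r A0 \<longleftrightarrow> A0 \<subseteq> V \<and> boot_closure V N r A0 = V"

definition min_contagious :: "nat set \<Rightarrow> (nat \<Rightarrow> nat set) \<Rightarrow> nat \<Rightarrow> nat" where
  "min_contagious V N r = (LEAST k. \<exists>A. contagious V N r A \<and> card A = k)"

end

theory Submission
  imports Defs
begin


definition pmX :: "'a set \<Rightarrow> ('a \<Rightarrow> 'a) set" where
  "pmX X = {\<sigma>. (\<forall>w\<in>X. \<sigma> w \<in> X \<and> \<sigma> w \<noteq> w \<and> \<sigma> (\<sigma> w) = w) \<and> (\<forall>w. w \<notin> X \<longrightarrow> \<sigma> w = w)}"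

fun g :: "nat \<Rightarrow> nat" where
  "g 0 = 1" | "g (Suc 0) = 0" | "g (Suc (Suc k)) = Suc k * g k"

lemma finite_pmX: assumes "finite X" shows "finite (pmX X)"
proof -
  have "pmX X \<subseteq> {f. \<forall>x. (x \<in> X \<longrightarrow> f x \<in> X) \<and> (x \<notin> X \<longrightarrow> f x = x)}"
    unfolding pmX_def by auto
  moreover have "inj_on (\<lambda>f. restrict f X) {f. \<forall>x. (x \<in> X \<longrightarrow> f x \<in> X) \<and> (x \<notin> X \<longrightarrow> f x = x)}"
    by (auto simp: inj_on_def fun_eq_iff restrict_def) (metis)
  moreover have "(\<lambda>f. restrict f X) ` {f. \<forall>x. (x \<in> X \<longrightarrow> f x \<in> X) \<and> (x \<notin> X \<longrightarrow> f x = x)} \<subseteq> X \<rightarrow>\<^sub>E X"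
    by auto
  ultimately show ?thesis
    by (meson assms finite_PiE finite_imageD finite_subset)
qed

lemma restr_card:
  assumes "a \<in> X" "b \<in> X" "a \<noteq> b" "a \<notin> T'" "b \<notin> T'" "a \<notin> f ` T'" "b \<notin> f ` T'"
  shows "card {\<sigma>\<in>pmX X. \<sigma> a = b \<and> (\<forall>t\<in>T'. \<sigma> t = f t)}
       = card {\<tau>\<in>pmX (X - {a,b}). \<forall>t\<in>T'. \<tau> t = f t}"
proof (rule bij_betw_same_card)
  show "bij_betw (\<lambda>\<sigma>. \<sigma>(a:=a, b:=b)) {\<sigma>\<in>pmX X. \<sigma> a = b \<and> (\<forall>t\<in>T'. \<sigma> t = f t)}
       {\<tau>\<in>pmX (X - {a,b}). \<forall>t\<in>T'. \<tau> t = f t}"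
  proof (rule bij_betw_byWitness[where f'="\<lambda>\<tau>. \<tau>(a:=b, b:=a)"])
    show "\<forall>\<sigma>\<in>{\<sigma>\<in>pmX X. \<sigma> a = b \<and> (\<forall>t\<in>T'. \<sigma> t = f t)}. (\<sigma>(a:=a, b:=b))(a:=b, b:=a) = \<sigma>"
      using assms by (auto simp: pmX_def fun_eq_iff)
    show "\<forall>\<tau>\<in>{\<tau>\<in>pmX (X - {a,b}). \<forall>t\<in>T'. \<tau> t = f t}. (\<tau>(a:=b, b:=a))(a:=a, b:=b) = \<tau>"
      using assms by (auto simp: pmX_def fun_eq_iff)
    show "(\<lambda>\<sigma>. \<sigma>(a:=a, b:=b)) ` {\<sigma>\<in>pmX X. \<sigma> a = b \<and> (\<forall>t\<in>T'. \<sigma> t = f t)}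
       \<subseteq> {\<tau>\<in>pmX (X - {a,b}). \<forall>t\<in>T'. \<tau> t = f t}"
    proof (rule image_subsetI)
      fix \<sigma> assume s: "\<sigma> \<in> {\<sigma>\<in>pmX X. \<sigma> a = b \<and> (\<forall>t\<in>T'. \<sigma> t = f t)}"
      then have s1: "\<And>w. w \<in> X \<Longrightarrow> \<sigma> w \<in> X \<and> \<sigma> w \<noteq> w \<and> \<sigma> (\<sigma> w) = w"
        and s2: "\<And>w. w \<notin> X \<Longrightarrow> \<sigma> w = w" and s3: "\<sigma> a = b" and s4: "\<forall>t\<in>T'. \<sigma> t = f t"
        unfolding pmX_def by auto
      have sb: "\<sigma> b = a" using s1[OF assms(1)] s3 by simp
      have A: "\<sigma> w \<in> X - {a,b} \<and> \<sigma> w \<noteq> w \<and> \<sigma> (\<sigma> w) = w" if "w \<in> X - {a,b}" for w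
      proof -
        have "\<sigma> w \<noteq> a" using s1[of w] that s3 by (metis DiffD1 DiffD2 insertCI)
        moreover have "\<sigma> w \<noteq> b" using s1[of w] that sb by (metis DiffD1 DiffD2 insertCI)
        ultimately show ?thesis using s1[of w] that by auto
      qed
      show "\<sigma>(a:=a, b:=b) \<in> {\<tau>\<in>pmX (X - {a,b}). \<forall>t\<in>T'. \<tau> t = f t}"
        unfolding pmX_def using A s2 s4 assms by auto
    qed
    show "(\<lambda>\<tau>. \<tau>(a:=b, b:=a)) ` {\<tau>\<in>pmX (X - {a,b}). \<forall>t\<in>T'. \<tau> t = f t}
       \<subseteq> {\<sigma>\<in>pmX X. \<sigma> a = b \<and> (\<forall>t\<in>T'. \<sigma> t = f t)}"
    proof (rule image_subsetI)
      fix \<tau> assume s: "\<tau> \<in> {\<tau>\<in>pmX (X - {a,b}). \<forall>t\<in>T'. \<tau> t = f t}"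
      then have s1: "\<And>w. w \<in> X - {a,b} \<Longrightarrow> \<tau> w \<in> X - {a,b} \<and> \<tau> w \<noteq> w \<and> \<tau> (\<tau> w) = w"
        and s2: "\<And>w. w \<notin> X - {a,b} \<Longrightarrow> \<tau> w = w" and s4: "\<forall>t\<in>T'. \<tau> t = f t"
        unfolding pmX_def by auto
      have A: "(\<tau>(a:=b, b:=a)) w \<in> X \<and> (\<tau>(a:=b, b:=a)) w \<noteq> w \<and> (\<tau>(a:=b, b:=a)) ((\<tau>(a:=b, b:=a)) w) = w"
        if "w \<in> X" for w
      proof (cases "w = a \<or> w = b")
        case True then show ?thesis using assms by auto
      next
        case False
        then have "w \<in> X - {a,b}" using that by auto
        then show ?thesis using s1[of w] False by auto
      qed
      have B: "(\<tau>(a:=b, b:=a)) w = w" if "w \<notin> X" for w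
        using that s2[of w] assms by auto
      show "\<tau>(a:=b, b:=a) \<in> {\<sigma>\<in>pmX X. \<sigma> a = b \<and> (\<forall>t\<in>T'. \<sigma> t = f t)}"
        unfolding pmX_def using A B s4 assms by auto
    qed
  qed
qed

lemma card_pmX: "finite X \<Longrightarrow> card (pmX X) = g (card X)"
proof (induction "card X" arbitrary: X rule: less_induct)
  case less
  show ?case
  proof (cases "card X")
    case 0
    then have "X = {}" using less.prems by auto
    then have "pmX X = {id}" by (auto simp: pmX_def fun_eq_iff)
    then show ?thesis using 0 by simp
  next
    case (Suc k)
    then obtain a where a: "a \<in> X" by (metis card.empty card_eq_0_iff nat.distinct(1) ex_in_conv)
    show ?thesis
    proof (cases k)
      case 0
      then have "X = {a}" using Suc a less.prems by (auto simp: card_Suc_eq)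
      then have "pmX X = {}" by (auto simp: pmX_def)
      then show ?thesis using Suc 0 by simp
    next
      case (Suc j)
      have eq: "pmX X = (\<Union>b\<in>X-{a}. {\<sigma>\<in>pmX X. \<sigma> a = b \<and> (\<forall>t\<in>{}. \<sigma> t = id t)})"
        using a by (auto simp: pmX_def)
      have fin: "finite (pmX X)" using finite_pmX less.prems by blast
      have "card (pmX X) = card (\<Union>b\<in>X-{a}. {\<sigma>\<in>pmX X. \<sigma> a = b \<and> (\<forall>t\<in>{}. \<sigma> t = id t)})"
        using eq by (rule arg_cong)
      also have "\<dots> = (\<Sum>b\<in>X-{a}. card {\<sigma>\<in>pmX X. \<sigma> a = b \<and> (\<forall>t\<in>{}. \<sigma> t = id t)})"
        by (rule card_UN_disjoint) (use less.prems fin in auto)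
      also have "\<dots> = (\<Sum>b\<in>X-{a}. g j)"
      proof (rule sum.cong)
        fix b assume b: "b \<in> X - {a}"
        have "card {\<sigma>\<in>pmX X. \<sigma> a = b \<and> (\<forall>t\<in>{}. \<sigma> t = id t)} = card {\<tau>\<in>pmX (X - {a,b}). \<forall>t\<in>{}. \<tau> t = id t}"
          by (rule restr_card) (use a b in auto)
        also have "\<dots> = card (pmX (X - {a,b}))" by simp
        also have "\<dots> = g (card (X - {a,b}))"
          by (rule less.hyps) (use a b less.prems `card X = Suc k` in auto)
        also have "card (X - {a,b}) = j" using a b less.prems `card X = Suc k` Suc
          by (auto simp: card_Diff_subset card_insert_if)
        finally show "card {\<sigma>\<in>pmX X. \<sigma> a = b \<and> (\<forall>t\<in>{}. \<sigma> t = id t)} = g j" .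
      qed simp
      also have "\<dots> = Suc j * g j" using a less.prems `card X = Suc k` Suc by simp
      finally show ?thesis using `card X = Suc k` Suc by simp
    qed
  qed
qed

lemma constr_card:
  assumes "finite T" "finite X" "T \<subseteq> X" "f ` T \<subseteq> X" "inj_on f T" "f ` T \<inter> T = {}"
  shows "card {\<sigma>\<in>pmX X. \<forall>t\<in>T. \<sigma> t = f t} = card (pmX (X - (T \<union> f ` T)))"
  using assms
proof (induction T arbitrary: X rule: finite_induct)
  case empty
  then show ?case by simp
next
  case (insert a T)
  have h2: "f a \<notin> T" "a \<notin> f ` T" "a \<noteq> f a" using insert.prems(5) by auto
  have h4: "f a \<notin> f ` T" "inj_on f T" using insert.prems(4) insert.hyps(2) by auto
  have h5: "T \<subseteq> X - {a, f a}" using insert.prems(2) insert.hyps(2) h2 by auto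
  have h6: "f ` T \<subseteq> X - {a, f a}" using insert.prems(3) h2 h4 by blast
  have h7: "f ` T \<inter> T = {}" using insert.prems(5) by blast
  have "{\<sigma>\<in>pmX X. \<forall>t\<in>insert a T. \<sigma> t = f t} = {\<sigma>\<in>pmX X. \<sigma> a = f a \<and> (\<forall>t\<in>T. \<sigma> t = f t)}"
    by auto
  also have "card \<dots> = card {\<tau>\<in>pmX (X - {a, f a}). \<forall>t\<in>T. \<tau> t = f t}"
    by (rule restr_card) (use insert in auto)
  also have "\<dots> = card (pmX (X - {a, f a} - (T \<union> f ` T)))"
    by (rule insert.IH) (use h5 h6 h7 h4 insert.prems(1) in auto)
  also have "X - {a, f a} - (T \<union> f ` T) = X - (insert a T \<union> f ` insert a T)" by auto
  finally show ?case .
qed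

lemma g_pos: "even N \<Longrightarrow> g N > 0"
  by (induction N rule: g.induct) auto

lemma g_mono: "2 * m \<le> N \<Longrightarrow> (N - 2*m) ^ m * g (N - 2*m) \<le> g N"
proof (induction m arbitrary: N)
  case 0
  then show ?case by simp
next
  case (Suc m)
  then obtain K where K: "N = Suc (Suc K)" by (cases N; cases "N - 1") auto
  have "(N - 2 * Suc m) ^ Suc m * g (N - 2 * Suc m) = (K - 2*m) * ((K - 2*m) ^ m * g (K - 2*m))"
    using K by simp
  also have "\<dots> \<le> Suc K * g K"
    by (rule mult_mono) (use Suc K in auto)
  finally show ?case using K by simp
qed



lemma boot_mono: "boot_step V N r A i \<subseteq> boot_step V N r A (Suc i)"
  by auto

lemma boot_mono_le: "i \<le> j \<Longrightarrow> boot_step V N r A i \<subseteq> boot_step V N r A j"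
  by (rule lift_Suc_mono_le[of "boot_step V N r A"]) (auto)

lemma boot_sub: "A \<subseteq> V \<Longrightarrow> boot_step V N r A i \<subseteq> V"
  by (induction i) auto

lemma boot_reach:
  assumes "finite V" "A \<subseteq> V" "boot_closure V N r A = V"
  shows "\<exists>I. boot_step V N r A I = V"
proof -
  have "\<forall>v\<in>V. \<exists>i. v \<in> boot_step V N r A i"
    using assms(3) unfolding boot_closure_def by auto
  then obtain h where h: "\<forall>v\<in>V. v \<in> boot_step V N r A (h v)" by metis
  let ?I = "Max (h ` V \<union> {0})"
  have "V \<subseteq> boot_step V N r A ?I"
  proof
    fix v assume v: "v \<in> V"
    have "h v \<le> ?I" using assms(1) v by (auto intro: Max_ge)
    then show "v \<in> boot_step V N r A ?I" using boot_mono_le h v by blast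
  qed
  then show ?thesis using boot_sub[OF assms(2)] by blast
qed

lemma two_elems: assumes "2 \<le> card X" obtains x y where "x \<in> X" "y \<in> X" "x \<noteq> y"
proof -
  have "finite X" "X \<noteq> {}" using assms by (auto intro: card_ge_0_finite)
  then obtain x where x: "x \<in> X" by auto
  have "card (X - {x}) \<ge> 1" using assms x `finite X` by (simp add: card_Diff_singleton)
  then obtain y where "y \<in> X - {x}" by (metis One_nat_def card.empty ex_in_conv not_one_le_zero)
  then show ?thesis using x that by auto
qed

lemma det:
  fixes \<sigma> :: "nat \<times> nat \<Rightarrow> nat \<times> nat"
  assumes pm: "\<sigma> \<in> perfect_matchings n d"
    and con: "contagious {0..<n} (cm_nbhd d \<sigma>) 2 A"
    and kA: "card A \<le> k" and ks: "k \<le> s" and sn: "s \<le> n"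
  shows "\<exists>S T. S \<subseteq> {0..<n} \<and> card S = s \<and> T \<subseteq> S \<times> {0..<d} \<and> card T = 2*(s-k)
           \<and> \<sigma> ` T \<subseteq> S \<times> {0..<d} \<and> \<sigma> ` T \<inter> T = {}"
proof -
  define V where "V = {0..<n}"
  define N where "N = cm_nbhd d \<sigma>"
  define B where "B = boot_step V N 2 A"
  have AV: "A \<subseteq> V" using con unfolding contagious_def V_def by auto
  have BV: "B i \<subseteq> V" for i unfolding B_def by (rule boot_sub[OF AV])
  have finB: "finite (B i)" for i using BV[of i] finite_subset unfolding V_def by blast
  have Bmono: "i \<le> j \<Longrightarrow> B i \<subseteq> B j" for i j unfolding B_def by (rule boot_mono_le)
  obtain I where I: "B I = V"
    using boot_reach[of V A N 2] AV con unfolding B_def contagious_def V_def N_def by auto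
  have ex: "\<exists>i. s \<le> card (B i)" using I sn unfolding V_def by (intro exI[of _ I]) simp
  define j where "j = (LEAST i. s \<le> card (B i))"
  have j1: "s \<le> card (B j)" unfolding j_def using LeastI_ex[OF ex] .
  have j2: "i < j \<Longrightarrow> card (B i) < s" for i unfolding j_def using not_less_Least by (metis not_le)
  have B0: "B 0 = A" unfolding B_def by simp
  show ?thesis
  proof (cases j)
    case 0
    then have "card A = s" using j1 kA ks B0 by simp
    then show ?thesis using AV ks kA V_def by (intro exI[of _ A] exI[of _ "{}"]) auto
  next
    case (Suc i)
    have ci: "card (B i) < s" using j2 Suc by simp
    have sub: "B i \<subseteq> B j" using Bmono Suc by simp
    have "card (B j - B i) = card (B j) - card (B i)" using sub finB by (simp add: card_Diff_subset)
    then have "s - card (B i) \<le> card (B j - B i)" using j1 by simp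
    then obtain R where R: "R \<subseteq> B j - B i" "card R = s - card (B i)"
      by (meson obtain_subset_with_card_n)
    define S where "S = B i \<union> R"
    have finR: "finite R" using R finB finite_subset by (metis finite_Diff)
    have cS: "card S = s" unfolding S_def using R ci finB finR
      by (subst card_Un_disjoint) auto
    have SV: "S \<subseteq> V" unfolding S_def using R BV by auto
    have SBj: "S \<subseteq> B j" unfolding S_def using R sub by auto
    have BiS: "B i \<subseteq> S" unfolding S_def by auto
    define rank where "rank v = (LEAST r. v \<in> B r)" for v
    have rank1: "v \<in> B (rank v)" if "v \<in> S" for v
      unfolding rank_def using that SBj by (metis LeastI subsetD)
    have rank2: "rank v \<le> r" if "v \<in> B r" for v r
      unfolding rank_def using that by (rule Least_le)
    have rank3: "v \<notin> B r" if "r < rank v" for v r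
      using not_less_Least[of r "\<lambda>r. v \<in> B r"] that unfolding rank_def by blast
    define T where "T = {t \<in> S \<times> {0..<d}. fst t \<notin> A \<and> \<sigma> t \<in> S \<times> {0..<d} \<and> rank (fst (\<sigma> t)) < rank (fst t)}"
    have finS: "finite S" using finite_subset[OF SV] V_def by blast
    have finT: "finite T"
      by (rule finite_subset[of _ "S \<times> {0..<d}"]) (use finS in \<open>auto simp: T_def\<close>)
    have Tv: "2 \<le> card {t \<in> T. fst t = v}" if v: "v \<in> S - A" for v
    proof -
      have vS: "v \<in> S" using v by auto
      define r where "r = rank v"
      have r0: "r \<noteq> 0"
      proof
        assume "r = 0" then show False using rank1[OF vS] B0 v r_def by auto
      qed
      then obtain q where q: "r = Suc q" by (cases r) auto
      have vBr: "v \<in> B r" using rank1[OF vS] r_def by simp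
      have vBq: "v \<notin> B q" using rank3[of q v] q r_def by simp
      have c2: "2 \<le> card (N v \<inter> B q)" using vBr vBq q unfolding B_def by auto
      have rj: "r \<le> j" using rank2[of v j] vS SBj r_def by auto
      have BqS: "B q \<subseteq> S" using Bmono[of q i] rj q Suc BiS by auto
      obtain u1 u2 where u: "u1 \<in> N v \<inter> B q" "u2 \<in> N v \<inter> B q" "u1 \<noteq> u2"
        using two_elems[OF c2] by blast
      have good: "(v, a) \<in> T" if "u \<in> N v \<inter> B q" "a < d" "b < d" "\<sigma> (v, a) = (u, b)" for u a b
      proof -
        have "rank u \<le> q" using rank2 that(1) by auto
        then have "rank u < rank v" using q r_def by simp
        then show ?thesis unfolding T_def using that vS v BqS by auto
      qed
      obtain a1 b1 where ab1: "a1 < d" "b1 < d" "\<sigma> (v, a1) = (u1, b1)"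
        using u(1) unfolding N_def cm_nbhd_def by auto
      obtain a2 b2 where ab2: "a2 < d" "b2 < d" "\<sigma> (v, a2) = (u2, b2)"
        using u(2) unfolding N_def cm_nbhd_def by auto
      have "a1 \<noteq> a2" using ab1 ab2 u(3) by auto
      then have "{(v,a1),(v,a2)} \<subseteq> {t \<in> T. fst t = v}" "card {(v,a1),(v,a2)} = 2"
        using good[OF u(1) ab1] good[OF u(2) ab2] by auto
      then show ?thesis using finT by (metis (no_types, lifting) card_mono finite_subset mem_Collect_eq subsetI)
    qed
    have "2 * card (S - A) = (\<Sum>v\<in>S - A. 2)" by simp
    also have "\<dots> \<le> (\<Sum>v\<in>S - A. card {t \<in> T. fst t = v})" by (rule sum_mono) (use Tv in auto)
    also have "\<dots> = card (\<Union>v\<in>S - A. {t \<in> T. fst t = v})"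
      by (rule card_UN_disjoint[symmetric]) (use finT finS in auto)
    also have "\<dots> \<le> card T" by (rule card_mono[OF finT]) auto
    finally have cT: "2 * card (S - A) \<le> card T" .
    have finA: "finite A" using AV V_def finite_subset by blast
    have "card S - card A \<le> card (S - A)" by (rule diff_card_le_card_Diff[OF finA])
    then have "card (S - A) \<ge> s - k" using cS kA by linarith
    then have "2 * (s - k) \<le> card T" using cT by linarith
    then obtain T' where T': "T' \<subseteq> T" "card T' = 2 * (s - k)" by (meson obtain_subset_with_card_n)
    have invol: "\<sigma> (\<sigma> t) = t" if "t \<in> T" for t
      using pm that SV unfolding perfect_matchings_def cells_def T_def V_def by auto
    have disj: "\<sigma> ` T' \<inter> T' = {}"
    proof (rule ccontr)
      assume "\<sigma> ` T' \<inter> T' \<noteq> {}"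
      then obtain t where t: "t \<in> T'" "\<sigma> t \<in> T'" by auto
      then have "rank (fst (\<sigma> (\<sigma> t))) < rank (fst (\<sigma> t))" "rank (fst (\<sigma> t)) < rank (fst t)"
        using T' unfolding T_def by auto
      then show False using invol[of t] t T' by auto
    qed
    show ?thesis
      apply (rule exI[of _ S], rule exI[of _ T'])
      using SV cS T' disj unfolding V_def T_def by auto
  qed
qed



lemma pm_eq: "perfect_matchings n d = pmX (cells n d)"
  unfolding perfect_matchings_def pmX_def by simp

lemma card_cells: "card (cells n d) = n * d" unfolding cells_def by simp

definition Bad :: "nat \<Rightarrow> nat \<Rightarrow> nat \<Rightarrow> nat \<Rightarrow> (nat \<times> nat \<Rightarrow> nat \<times> nat) set" where
  "Bad n d s m = {\<sigma>. \<exists>S T. S \<subseteq> {0..<n} \<and> card S = s \<and> T \<subseteq> S \<times> {0..<d} \<and> card T = m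
           \<and> \<sigma> ` T \<subseteq> S \<times> {0..<d} \<and> \<sigma> ` T \<inter> T = {}}"

lemma Bad_card:
  assumes "2 * m \<le> n * d"
  shows "card (perfect_matchings n d \<inter> Bad n d s m)
         \<le> (n choose s) * ((s*d) choose m) * (s*d)^m * g (n*d - 2*m)"
proof -
  define PM where "PM = perfect_matchings n d"
  define SS where "SS = {S. S \<subseteq> {0..<n} \<and> card S = s}"
  define TT where "TT S = {T. T \<subseteq> S \<times> {0..<d} \<and> card T = m}" for S :: "nat set"
  define FF where "FF S T = {f \<in> T \<rightarrow>\<^sub>E S \<times> {0..<d}. inj_on f T \<and> f ` T \<inter> T = {}}"
    for S :: "nat set" and T :: "(nat \<times> nat) set"
  define Con where "Con T f = {\<sigma> \<in> PM. \<forall>t\<in>T. \<sigma> t = f t}" for T :: "(nat \<times> nat) set" and f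
  have finSS: "finite SS" unfolding SS_def by (rule finite_subset[of _ "Pow {0..<n}"]) auto
  have cSS: "card SS = n choose s" unfolding SS_def using n_subsets[of "{0..<n}" s] by simp
  have finTT: "finite (TT S)" if "S \<in> SS" for S
    unfolding TT_def by (rule finite_subset[of _ "Pow (S \<times> {0..<d})"]) (use that finSS in \<open>auto simp: SS_def intro: finite_subset\<close>)
  have cTT: "card (TT S) = (s*d) choose m" if "S \<in> SS" for S
  proof -
    have "finite S" "card S = s" using that unfolding SS_def by (auto intro: finite_subset)
    then show ?thesis unfolding TT_def using n_subsets[of "S \<times> {0..<d}" m] by (simp add: card_cartesian_product)
  qed
  have finFF: "finite (FF S T)" and cFF: "card (FF S T) \<le> (s*d)^m" if "S \<in> SS" "T \<in> TT S" for S T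
  proof -
    have fS: "finite S" "card S = s" using that unfolding SS_def by (auto intro: finite_subset)
    have fT: "finite T" "card T = m" using that fS unfolding TT_def
      by (auto intro: finite_subset[of _ "S \<times> {0..<d}"])
    have fin: "finite (T \<rightarrow>\<^sub>E S \<times> {0..<d})" using fS fT by (simp add: finite_PiE)
    show "finite (FF S T)" unfolding FF_def using fin by simp
    have "card (FF S T) \<le> card (T \<rightarrow>\<^sub>E S \<times> {0..<d})"
      unfolding FF_def by (rule card_mono[OF fin]) auto
    also have "\<dots> = (s*d)^m" using fS fT by (simp add: card_PiE card_cartesian_product)
    finally show "card (FF S T) \<le> (s*d)^m" .
  qed
  have cCon: "card (Con T f) = g (n*d - 2*m)" if "S \<in> SS" "T \<in> TT S" "f \<in> FF S T" for S T f
  proof -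
    have fS: "finite S" "S \<subseteq> {0..<n}" using that unfolding SS_def by (auto intro: finite_subset)
    have fT: "finite T" "card T = m" "T \<subseteq> S \<times> {0..<d}" using that fS unfolding TT_def
      by (auto intro: finite_subset[of _ "S \<times> {0..<d}"])
    have ff: "f ` T \<subseteq> S \<times> {0..<d}" "inj_on f T" "f ` T \<inter> T = {}"
      using that(3) unfolding FF_def by (blast dest: PiE_mem)+
    have sub: "S \<times> {0..<d} \<subseteq> cells n d" using fS unfolding cells_def by auto
    have "card (Con T f) = card (pmX (cells n d - (T \<union> f ` T)))"
      unfolding Con_def PM_def pm_eq
      by (rule constr_card) (use fT ff sub in \<open>auto simp: cells_def\<close>)
    also have "\<dots> = g (card (cells n d - (T \<union> f ` T)))"
      by (rule card_pmX) (simp add: cells_def)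
    also have "card (cells n d - (T \<union> f ` T)) = n*d - 2*m"
    proof -
      have "card (T \<union> f ` T) = 2*m" using fT ff by (simp add: card_Un_disjoint card_image Int_commute)
      moreover have "T \<union> f ` T \<subseteq> cells n d" using fT ff sub by auto
      ultimately show ?thesis using fT by (simp add: card_Diff_subset card_cells)
    qed
    finally show ?thesis .
  qed
  have finPM: "finite PM" unfolding PM_def pm_eq cells_def by (rule finite_pmX) simp
  have finCon: "finite (Con T f)" for T f unfolding Con_def using finPM by simp
  have cover: "PM \<inter> Bad n d s m \<subseteq> (\<Union>S\<in>SS. \<Union>T\<in>TT S. \<Union>f\<in>FF S T. Con T f)"
  proof
    fix \<sigma> assume "\<sigma> \<in> PM \<inter> Bad n d s m"
    then have pm: "\<sigma> \<in> PM" and "\<sigma> \<in> Bad n d s m" by auto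
    then obtain S T where ST: "S \<subseteq> {0..<n}" "card S = s" "T \<subseteq> S \<times> {0..<d}" "card T = m"
      "\<sigma> ` T \<subseteq> S \<times> {0..<d}" "\<sigma> ` T \<inter> T = {}" unfolding Bad_def by blast
    have inv: "\<And>w. w \<in> cells n d \<Longrightarrow> \<sigma> (\<sigma> w) = w" using pm unfolding PM_def perfect_matchings_def by auto
    have Tc: "T \<subseteq> cells n d" using ST unfolding cells_def by auto
    have inj: "inj_on \<sigma> T"
    proof (rule inj_onI)
      fix x y assume "x \<in> T" "y \<in> T" "\<sigma> x = \<sigma> y"
      then show "x = y" using inv[of x] inv[of y] Tc by (metis subsetD)
    qed
    have "restrict \<sigma> T \<in> FF S T" unfolding FF_def using ST inj
      by (auto simp: inj_on_def)
    moreover have "\<sigma> \<in> Con T (restrict \<sigma> T)" unfolding Con_def using pm by auto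
    moreover have "S \<in> SS" "T \<in> TT S" unfolding SS_def TT_def using ST by auto
    ultimately show "\<sigma> \<in> (\<Union>S\<in>SS. \<Union>T\<in>TT S. \<Union>f\<in>FF S T. Con T f)" by blast
  qed
  have "card (PM \<inter> Bad n d s m) \<le> card (\<Union>S\<in>SS. \<Union>T\<in>TT S. \<Union>f\<in>FF S T. Con T f)"
    by (rule card_mono[OF _ cover]) (use finSS finTT finFF finCon in auto)
  also have "\<dots> \<le> (\<Sum>S\<in>SS. card (\<Union>T\<in>TT S. \<Union>f\<in>FF S T. Con T f))" by (rule card_UN_le[OF finSS])
  also have "\<dots> \<le> (\<Sum>S\<in>SS. (\<Sum>T\<in>TT S. card (\<Union>f\<in>FF S T. Con T f)))"
    by (rule sum_mono) (rule card_UN_le, rule finTT)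
  also have "\<dots> \<le> (\<Sum>S\<in>SS. (\<Sum>T\<in>TT S. (\<Sum>f\<in>FF S T. card (Con T f))))"
    by (rule sum_mono, rule sum_mono) (rule card_UN_le, rule finFF)
  also have "\<dots> = (\<Sum>S\<in>SS. (\<Sum>T\<in>TT S. card (FF S T) * g (n*d - 2*m)))"
    by (rule sum.cong[OF refl], rule sum.cong[OF refl]) (simp add: cCon)
  also have "\<dots> \<le> (\<Sum>S\<in>SS. (\<Sum>T\<in>TT S. (s*d)^m * g (n*d - 2*m)))"
    by (rule sum_mono, rule sum_mono) (simp add: cFF)
  also have "\<dots> = (\<Sum>S\<in>SS. ((s*d) choose m) * ((s*d)^m * g (n*d - 2*m)))"
    by (rule sum.cong[OF refl]) (simp add: cTT)
  also have "\<dots> = (n choose s) * ((s*d) choose m) * (s*d)^m * g (n*d - 2*m)"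
    by (simp add: cSS)
  finally show ?thesis unfolding PM_def .
qed



lemma pow_fact_le_exp: fixes x :: real assumes "0 \<le> x" shows "x ^ n / fact n \<le> exp x"
proof -
  have s: "summable (\<lambda>i. x ^ i /\<^sub>R fact i)" using exp_converges[of x] by (rule sums_summable)
  have "(\<Sum>i\<in>{n}. x ^ i /\<^sub>R fact i) \<le> (\<Sum>i. x ^ i /\<^sub>R fact i)"
    by (rule sum_le_suminf[OF s]) (use assms in auto)
  also have "\<dots> = exp x" using exp_converges[of x] by (simp add: sums_iff)
  finally show ?thesis by (simp add: divide_inverse_commute)
qed

lemma choose_bound: "real (n choose s) * real s ^ s \<le> (exp 1 * real n) ^ s"
proof -
  have a: "real (n choose s) * fact s \<le> real n ^ s"
    using binomial_fact_pow[of n s] by (metis of_nat_fact of_nat_le_iff of_nat_mult of_nat_power)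
  have b: "real s ^ s \<le> exp (real s) * fact s"
    using pow_fact_le_exp[of "real s" s] by (simp add: divide_le_eq)
  have "real (n choose s) * real s ^ s \<le> real (n choose s) * (exp (real s) * fact s)"
    by (rule mult_left_mono[OF b]) simp
  also have "\<dots> = exp (real s) * (real (n choose s) * fact s)" by simp
  also have "\<dots> \<le> exp (real s) * real n ^ s" by (rule mult_left_mono[OF a]) simp
  also have "exp (real s) = exp 1 ^ s" using exp_of_nat_mult[of s 1] by simp
  then have "exp (real s) * real n ^ s = (exp 1 * real n) ^ s" by (simp add: power_mult_distrib)
  finally show ?thesis .
qed

lemma asym:
  fixes n d k L s m :: nat and D :: real
  assumes L3: "L \<ge> 3" and k1: "k \<ge> 1" and sdef: "s = L*k" and mdef: "m = (2*L-2)*k"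
    and sn: "s \<le> n" and mnd: "4*m \<le> n*d" and d1: "d \<ge> 1"
    and xD: "real s / real n \<le> 2*L/D" and D0: "D > 0" and Dd: "D^(L-2) \<ge> real d^(2*L-1)"
    and CL: "exp 1^L * (2*exp 1)^(2*L-2) * (2*L)^(L-2) \<le> real d / 2"
  shows "real (n choose s) * real ((s*d) choose m) * real (s*d)^m / real (n*d-2*m)^m \<le> (1/2)^k"
proof -
  define e where "e = exp (1::real)"
  define M where "M = 2*L-2"
  define x where "x = real s / real n"
  define y where "y = real s / real m"
  have e0: "e > 0" unfolding e_def by simp
  have s0: "s > 0" using L3 k1 sdef by simp
  have m0: "m > 0" using L3 k1 mdef by simp
  have n0: "n > 0" using s0 sn by simp
  have x0: "x > 0" unfolding x_def using s0 n0 by simp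
  have y1: "y \<le> 1" unfolding y_def using L3 sdef mdef m0 by (simp add: divide_le_eq_1)
  have y0: "y > 0" unfolding y_def using s0 m0 by simp
  have h1: "real (n choose s) \<le> (e / x) ^ s"
  proof -
    have "real (n choose s) * real s ^ s \<le> (e * real n) ^ s" using choose_bound unfolding e_def .
    then have "real (n choose s) \<le> (e * real n) ^ s / real s ^ s" using s0 by (simp add: le_divide_eq)
    also have "\<dots> = (e / x) ^ s" unfolding x_def using n0 s0 by (simp add: power_divide)
    finally show ?thesis .
  qed
  have h2: "real ((s*d) choose m) \<le> (e * real (s*d) / real m) ^ m"
  proof -
    have "real ((s*d) choose m) * real m ^ m \<le> (e * real (s*d)) ^ m" using choose_bound unfolding e_def .
    then have "real ((s*d) choose m) \<le> (e * real (s*d)) ^ m / real m ^ m" using m0 by (simp add: le_divide_eq)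
    also have "\<dots> = (e * real (s*d) / real m) ^ m" using m0 by (simp add: power_divide)
    finally show ?thesis .
  qed
  have nd2: "real (n*d-2*m) \<ge> real (n*d) / 2"
  proof -
    have a: "real (4*m) \<le> real (n*d)" using mnd by (simp only: of_nat_le_iff)
    have a': "4 * real m \<le> real n * real d" using a by simp
    have b: "real (n*d-2*m) = real n * real d - 2 * real m" using mnd by (simp add: of_nat_diff)
    show ?thesis using a' b by (simp only: of_nat_mult)
  qed
  have ndpos: "real (n*d) > 0" using n0 d1 by simp
  have pos: "real (n*d-2*m) > 0" using nd2 ndpos by linarith
  have pp: "0 < real (n*d-2*m) * (real (n*d) / 2)" by (rule mult_pos_pos[OF pos]) (use ndpos in simp)
  have h3: "real (s*d)^m / real (n*d-2*m)^m \<le> (2*x)^m"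
  proof -
    have "real (s*d) / real (n*d-2*m) \<le> real (s*d) / (real (n*d) / 2)"
      by (rule divide_left_mono[OF nd2 _ pp]) simp
    also have "\<dots> = 2 * x" unfolding x_def using d1 n0 by (simp add: field_simps)
    finally have "real (s*d) / real (n*d-2*m) \<le> 2*x" .
    then have "(real (s*d) / real (n*d-2*m))^m \<le> (2*x)^m" by (rule power_mono) simp
    then show ?thesis by (simp add: power_divide)
  qed
  have "(e / x) ^ L * (2 * e * real d * x * y) ^ M = e^L * (2*e*real d*y)^M * x^(L-2)"
  proof -
    have "M = L + (L-2)" unfolding M_def using L3 by simp
    then have "(2 * e * real d * x * y) ^ M = (2*e*real d*y)^M * x^L * x^(L-2)"
      by (metis (no_types, lifting) mult.commute mult.left_commute power_add power_mult_distrib)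
    then show ?thesis using x0 by (simp add: power_divide field_simps)
  qed
  also have "\<dots> \<le> e^L * (2*e*real d)^M * x^(L-2)"
  proof -
    have "(2*e*real d*y)^M \<le> (2*e*real d)^M"
      by (rule power_mono) (use y1 y0 e0 in \<open>auto intro!: mult_left_le\<close>)
    then show ?thesis using e0 x0 by (intro mult_right_mono mult_left_mono) auto
  qed
  also have "\<dots> \<le> e^L * (2*e*real d)^M * ((2*L)^(L-2) / real d^(2*L-1))"
  proof -
    have "x^(L-2) \<le> (2*L/D)^(L-2)" by (rule power_mono) (use xD x0 x_def in auto)
    also have "\<dots> = (2*L)^(L-2) / D^(L-2)" by (simp add: power_divide)
    also have "\<dots> \<le> (2*L)^(L-2) / real d^(2*L-1)"
      by (rule divide_left_mono[OF Dd]) (use d1 D0 in auto)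
    finally show ?thesis using e0 by (intro mult_left_mono) auto
  qed
  also have "\<dots> = (e^L * (2*e)^M * (2*L)^(L-2)) / real d"
  proof -
    have "2*L-1 = Suc M" unfolding M_def using L3 by simp
    then show ?thesis using d1 by (simp add: power_mult_distrib field_simps)
  qed
  also have "\<dots> \<le> 1/2" using CL d1 unfolding e_def M_def by (simp add: divide_le_eq)
  finally have base: "(e / x) ^ L * (2 * e * real d * x * y) ^ M \<le> 1/2" .
  have "real (n choose s) * real ((s*d) choose m) * real (s*d)^m / real (n*d-2*m)^m
      = real (n choose s) * real ((s*d) choose m) * (real (s*d)^m / real (n*d-2*m)^m)" by simp
  also have "\<dots> \<le> (e / x) ^ s * (e * real (s*d) / real m) ^ m * (2*x)^m"
    by (intro mult_mono h1 h2 h3) (use e0 x0 m0 in \<open>auto intro!: mult_nonneg_nonneg divide_nonneg_nonneg\<close>)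
  also have "\<dots> = (e / x) ^ s * (2 * e * real d * x * y) ^ m"
  proof -
    have "(e * real (s*d) / real m) * (2*x) = 2 * e * real d * x * y" unfolding y_def by (simp add: field_simps)
    then show ?thesis by (metis mult.assoc power_mult_distrib)
  qed
  also have "\<dots> = ((e / x) ^ L * (2 * e * real d * x * y) ^ M) ^ k"
    unfolding sdef mdef M_def by (simp add: power_mult power_mult_distrib)
  also have "\<dots> \<le> (1/2)^k"
 by (rule power_mono[OF base]) (use e0 x0 y0 d1 in \<open>auto intro!: mult_nonneg_nonneg divide_nonneg_nonneg\<close>)
  finally show ?thesis .
qed



lemma Bad_prob:
  assumes ev: "even (n*d)" and m4: "4*m \<le> n*d" and nd0: "n*d > 0"
  shows "measure_pmf.prob (pmf_of_set (perfect_matchings n d)) (Bad n d s m)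
     \<le> real (n choose s) * real ((s*d) choose m) * real (s*d)^m / real (n*d-2*m)^m"
proof -
  define PM where "PM = perfect_matchings n d"
  have finPM: "finite PM" unfolding PM_def pm_eq cells_def by (rule finite_pmX) simp
  have cPM: "card PM = g (n*d)" unfolding PM_def pm_eq using card_pmX[of "cells n d"]
    by (simp add: card_cells cells_def)
  have gpos: "g (n*d) > 0" using g_pos ev by blast
  have ne: "PM \<noteq> {}" using cPM gpos by auto
  define K where "K = (n choose s) * ((s*d) choose m) * (s*d)^m"
  define g' where "g' = g (n*d - 2*m)"
  have g'pos: "g' > 0" unfolding g'_def using ev m4 by (intro g_pos) auto
  have gm: "(n*d - 2*m)^m * g' \<le> g (n*d)" unfolding g'_def using m4 by (intro g_mono) simp
  have cB: "card (PM \<inter> Bad n d s m) \<le> K * g'" unfolding PM_def K_def g'_def using m4 by (intro Bad_card) simp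
  have ndm: "n*d - 2*m > 0" using m4 nd0 by linarith
  then have pos: "real (n*d-2*m) > 0" by (simp only: of_nat_0_less_iff)
  have "measure_pmf.prob (pmf_of_set PM) (Bad n d s m) = card (PM \<inter> Bad n d s m) / card PM"
    by (rule measure_pmf_of_set[OF ne finPM])
  also have "\<dots> \<le> real (K * g') / real ((n*d - 2*m)^m * g')"
  proof (rule frac_le)
    show "real (card (PM \<inter> Bad n d s m)) \<le> real (K * g')" using cB by (simp only: of_nat_le_iff)
    show "0 < real ((n*d - 2*m)^m * g')" by (subst of_nat_0_less_iff) (use ndm g'pos in auto)
    show "real ((n*d - 2*m)^m * g') \<le> real (card PM)" unfolding cPM using gm by (simp only: of_nat_le_iff)
  qed simp
  also have "\<dots> = real K / real (n*d-2*m)^m" using g'pos by simp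
  finally show ?thesis unfolding PM_def K_def by simp
qed

lemma min_contagious_ex:
  assumes "A0 = {0..<n}"
  shows "\<exists>A. contagious {0..<n} N 2 A \<and> card A = min_contagious {0..<n} N 2"
proof -
  have b0: "boot_step {0..<n} N 2 {0..<n} 0 = {0..<n}" by simp
  have "contagious {0..<n} N 2 {0..<n}"
    unfolding contagious_def boot_closure_def
    using boot_sub[of "{0..<n}" "{0..<n}" N 2] b0 by blast
  then have "\<exists>k A. contagious {0..<n} N 2 A \<and> card A = k" by blast
  then show ?thesis unfolding min_contagious_def by (rule LeastI_ex)
qed



theorem theorem8:
  fixes \<epsilon> :: real
  assumes "\<epsilon> > 0"
  shows "\<exists>d0::nat. \<forall>d::nat. d > d0 \<longrightarrow>
           (\<forall>\<delta>>0. \<exists>N::nat. \<forall>n\<ge>N. even (n * d) \<longrightarrow>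
              measure_pmf.prob (pmf_of_set (perfect_matchings n d))
                {\<sigma>. real (min_contagious {0..<n} (cm_nbhd d \<sigma>) 2)
                       \<ge> real n / real d powr (2 + \<epsilon>)} \<ge> 1 - \<delta>)"
proof -
  define L :: nat where "L = nat \<lceil>3/\<epsilon>\<rceil> + 3"
  have L3: "L \<ge> 3" unfolding L_def by simp
  have Leps: "\<epsilon> * real (L-2) \<ge> 3"
  proof -
    have "real (L-2) = real (nat \<lceil>3/\<epsilon>\<rceil>) + 1" unfolding L_def by simp
    also have "real (nat \<lceil>3/\<epsilon>\<rceil>) \<ge> 3/\<epsilon>" by linarith
    then have "real (nat \<lceil>3/\<epsilon>\<rceil>) + 1 \<ge> 3/\<epsilon>" by linarith
    finally have h0: "3/\<epsilon> \<le> real (L-2)" .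
    have h: "\<epsilon> * (3/\<epsilon>) \<le> \<epsilon> * real (L-2)" by (rule mult_left_mono[OF h0]) (use assms in simp)
    have "\<epsilon> * (3/\<epsilon>) = 3" using assms by simp
    then show ?thesis using h by linarith
  qed
  define CL :: real where "CL = exp 1^L * (2*exp 1)^(2*L-2) * (2*L)^(L-2)"
  define d0 where "d0 = nat \<lceil>2 * CL\<rceil> + 16 * L"
  show ?thesis
  proof (rule exI[of _ d0], rule allI, rule impI)
    fix d :: nat assume dd0: "d > d0"
    have d1: "d \<ge> 1" using dd0 L3 unfolding d0_def by simp
    have dCL: "CL \<le> real d / 2"
    proof -
      have "2 * CL \<le> real (nat \<lceil>2 * CL\<rceil>)" by linarith
      also have "\<dots> \<le> real d"
      proof -
        have "nat \<lceil>2 * CL\<rceil> \<le> d" using dd0 unfolding d0_def by (meson le_add1 le_trans less_imp_le)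
        then show ?thesis by (simp only: of_nat_le_iff)
      qed
      finally show ?thesis by simp
    qed
    have "16 * L \<le> d" using dd0 unfolding d0_def by simp
    then have "real (16 * L) \<le> real d" by (simp only: of_nat_le_iff)
    then have d16: "16 * real L \<le> real d" by simp
    define D where "D = real d powr (2+\<epsilon>)"
    have D0: "D > 0" unfolding D_def using d1 by simp
    have Dge: "D \<ge> real d"
    proof -
      have "real d powr 1 \<le> real d powr (2+\<epsilon>)" by (rule powr_mono) (use assms d1 in auto)
      then show ?thesis unfolding D_def using d1 by simp
    qed
    have Dd: "D^(L-2) \<ge> real d^(2*L-1)"
    proof -
      have "D^(L-2) = D powr real (L-2)" using powr_realpow[OF D0] by simp
      also have "\<dots> = real d powr ((2+\<epsilon>) * real (L-2))" unfolding D_def by (simp add: powr_powr)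
      also have "\<dots> \<ge> real d powr real (2*L-1)"
      proof (rule powr_mono)
        have r1: "real (2*L-1) = 2 * real L - 1" using L3 by (simp add: of_nat_diff)
        have r2: "real (L-2) = real L - 2" using L3 by (simp add: of_nat_diff)
        have Leps': "3 \<le> \<epsilon> * (real L - 2)" using Leps r2 by simp
        then have "3 \<le> \<epsilon> * real L - 2 * \<epsilon>" by (simp add: algebra_simps)
        then show "real (2*L-1) \<le> (2+\<epsilon>) * real (L-2)" unfolding r1 r2 by (simp add: algebra_simps)
      qed (use d1 in simp)
      also have "real d powr real (2*L-1) = real d^(2*L-1)" using d1 by (simp add: powr_realpow)
      finally show ?thesis by simp
    qed
    show "\<forall>\<delta>>0. \<exists>N::nat. \<forall>n\<ge>N. even (n * d) \<longrightarrow>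
              measure_pmf.prob (pmf_of_set (perfect_matchings n d))
                {\<sigma>. real (min_contagious {0..<n} (cm_nbhd d \<sigma>) 2)
                       \<ge> real n / real d powr (2 + \<epsilon>)} \<ge> 1 - \<delta>"
    proof (intro allI impI)
      fix \<delta> :: real assume \<delta>0: "\<delta> > 0"
      obtain K :: nat where K: "(1/2::real)^K < \<delta>" using real_arch_pow_inv[OF \<delta>0, of "1/2"] by auto
      define N where "N = nat \<lceil>D * (real K + 1)\<rceil>"
      show "\<exists>N::nat. \<forall>n\<ge>N. even (n * d) \<longrightarrow>
              measure_pmf.prob (pmf_of_set (perfect_matchings n d))
                {\<sigma>. real (min_contagious {0..<n} (cm_nbhd d \<sigma>) 2)
                       \<ge> real n / real d powr (2 + \<epsilon>)} \<ge> 1 - \<delta>"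
      proof (intro exI[of _ N] allI impI)
        fix n :: nat assume nN: "n \<ge> N" and ev: "even (n * d)"
        have nD: "real n \<ge> D * (real K + 1)"
        proof -
          have "D * (real K + 1) \<le> real N" unfolding N_def by linarith
          also have "\<dots> \<le> real n" using nN by simp
          finally show ?thesis .
        qed
        have nD1: "real n / D \<ge> real K + 1" using nD D0 by (simp add: le_divide_eq mult.commute)
        define k where "k = nat \<lceil>real n / D\<rceil>"
        have kge: "real k \<ge> real n / D" unfolding k_def by linarith
        have q0: "0 \<le> real n / D" using D0 by simp
        have c0: "0 \<le> \<lceil>real n / D\<rceil>" using q0 by linarith
        have "real k = real_of_int \<lceil>real n / D\<rceil>" unfolding k_def using c0 by simp
        then have kle: "real k \<le> real n / D + 1" using ceiling_correct[of "real n / D"] by linarith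
        have k1: "k \<ge> 1" using kge nD1 by simp
        have kK: "k \<ge> K" using kge nD1 by simp
        have k2: "real k \<le> 2 * real n / D" using kle nD1 by simp
        define s where "s = L * k"
        define m where "m = 2 * (s - k)"
        have mdef: "m = (2*L-2)*k" unfolding m_def s_def by (simp add: diff_mult_distrib diff_mult_distrib2)
        have nDpos: "real n / D \<ge> 0" using D0 by simp
        define X where "X = real L * (real n / D)"
        have sle: "real s \<le> 2 * X"
        proof -
          have "real s = real L * real k" unfolding s_def by simp
          also have "\<dots> \<le> real L * (2 * (real n / D))" by (rule mult_left_mono) (use k2 in simp_all)
          also have "\<dots> = 2 * X" unfolding X_def by simp
          finally show ?thesis .
        qed
        have LD: "16 * real L \<le> D" using d16 Dge by simp
        have XD: "16 * X \<le> real n"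
        proof -
          have "16 * X = (16 * real L) * (real n / D)" unfolding X_def by simp
          also have "\<dots> \<le> D * (real n / D)" by (rule mult_right_mono[OF LD nDpos])
          also have "\<dots> = real n" using D0 by simp
          finally show ?thesis .
        qed
        have X0: "X \<ge> 0" unfolding X_def by (rule mult_nonneg_nonneg[OF _ nDpos]) simp
        have sn': "real s \<le> real n" using sle XD X0 by linarith
        then have sn: "s \<le> n" by (simp only: of_nat_le_iff)
        have mle: "real m \<le> 4 * X"
        proof -
          have "real m = real (2*L-2) * real k" unfolding mdef by simp
          also have "\<dots> \<le> real (2*L) * real k" by (rule mult_right_mono) simp_all
          also have "\<dots> = 2 * (real L * real k)" by simp
          also have "real L * real k = real s" unfolding s_def by simp
          finally show ?thesis using sle by linarith
        qed
        have "4 * real m \<le> real n" using mle XD by linarith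
        also have "\<dots> \<le> real n * real d"
          using mult_left_mono[of 1 "real d" "real n"] d1 by simp
        finally have "real (4*m) \<le> real (n*d)" by simp
        then have m4: "4*m \<le> n*d" by (simp only: of_nat_le_iff)
        have n0: "real n > 0" using nD1 D0 nDpos by (smt (verit) divide_nonpos_pos of_nat_0_le_iff)
        have xD: "real s / real n \<le> 2*L/D"
        proof -
          have "real s / real n \<le> 2 * X / real n" by (rule divide_right_mono[OF sle]) (use n0 in simp)
          also have "\<dots> = 2 * real L / D" unfolding X_def using n0 by simp
          finally show ?thesis by simp
        qed
        have nd0: "n * d > 0" using n0 d1 by simp
        have bound: "real (n choose s) * real ((s*d) choose m) * real (s*d)^m / real (n*d-2*m)^m \<le> (1/2)^k"
          by (rule asym[OF L3 k1 s_def mdef sn m4 d1 xD D0 Dd]) (use dCL in \<open>simp add: CL_def\<close>)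
        define PM where "PM = perfect_matchings n d"
        define good where "good = {\<sigma>. real (min_contagious {0..<n} (cm_nbhd d \<sigma>) 2) \<ge> real n / real d powr (2 + \<epsilon>)}"
        have sub: "PM - good \<subseteq> Bad n d s m"
        proof
          fix \<sigma> assume \<sigma>: "\<sigma> \<in> PM - good"
          obtain A where A: "contagious {0..<n} (cm_nbhd d \<sigma>) 2 A" "card A = min_contagious {0..<n} (cm_nbhd d \<sigma>) 2"
            using min_contagious_ex by blast
          have "real (card A) < real n / D" using \<sigma> A unfolding good_def D_def by auto
          then have "card A \<le> k" using kge by simp
          moreover have "k \<le> s" unfolding s_def using L3 by simp
          ultimately show "\<sigma> \<in> Bad n d s m"
            using det[of \<sigma> n d A k s] \<sigma> A sn unfolding PM_def Bad_def m_def by auto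
        qed
        have finPM: "finite PM" unfolding PM_def pm_eq cells_def by (rule finite_pmX) simp
        have cPM: "card PM = g (n*d)" unfolding PM_def pm_eq using card_pmX[of "cells n d"]
          by (simp add: card_cells cells_def)
        have cpos: "card PM > 0" using cPM g_pos ev by simp
        then have ne: "PM \<noteq> {}" by auto
        have "card PM \<le> card (PM \<inter> good) + card (PM \<inter> Bad n d s m)"
        proof -
          have "card PM \<le> card ((PM \<inter> good) \<union> (PM \<inter> Bad n d s m))"
            by (rule card_mono) (use finPM sub in auto)
          also have "\<dots> \<le> card (PM \<inter> good) + card (PM \<inter> Bad n d s m)" by (rule card_Un_le)
          finally show ?thesis .
        qed
        then have cc: "real (card PM) \<le> real (card (PM \<inter> good)) + real (card (PM \<inter> Bad n d s m))"
          by (simp only: of_nat_le_iff of_nat_add[symmetric])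
        have pg: "measure_pmf.prob (pmf_of_set PM) good = card (PM \<inter> good) / card PM"
          by (rule measure_pmf_of_set[OF ne finPM])
        have pb: "measure_pmf.prob (pmf_of_set PM) (Bad n d s m) = card (PM \<inter> Bad n d s m) / card PM"
          by (rule measure_pmf_of_set[OF ne finPM])
        have "measure_pmf.prob (pmf_of_set PM) (Bad n d s m) \<le> (1/2)^k"
          using Bad_prob[OF ev m4 nd0, of s] bound unfolding PM_def by linarith
        also have "(1/2::real)^k \<le> (1/2)^K" using kK by (simp add: power_decreasing)
        finally have pbd: "measure_pmf.prob (pmf_of_set PM) (Bad n d s m) < \<delta>" using K by linarith
        have cP: "real (card PM) > 0" using cpos by simp
        have k1': "(real (card PM) - real (card (PM \<inter> Bad n d s m))) / real (card PM)
                \<le> real (card (PM \<inter> good)) / real (card PM)"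
          by (rule divide_right_mono) (use cc cP in linarith, use cP in simp)
        have k2': "(real (card PM) - real (card (PM \<inter> Bad n d s m))) / real (card PM)
                = 1 - real (card (PM \<inter> Bad n d s m)) / real (card PM)"
          using cP by (simp add: diff_divide_distrib)
        have "1 - measure_pmf.prob (pmf_of_set PM) (Bad n d s m) \<le> measure_pmf.prob (pmf_of_set PM) good"
          using k1' k2' pg pb by simp
        then show "measure_pmf.prob (pmf_of_set (perfect_matchings n d))
                {\<sigma>. real (min_contagious {0..<n} (cm_nbhd d \<sigma>) 2)
                       \<ge> real n / real d powr (2 + \<epsilon>)} \<ge> 1 - \<delta>"
          using pbd unfolding PM_def good_def by linarith
      qed
    qed
  qed
qed


end
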